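(* Assume $K(i,j)=\phi(i)\wedge\phi(j)$ with $\phi$ positive and increasing. Then for all $n\ge2$ and $i\ge1$, $T_i^{n\mathbf e_i}$ has the same law as $\frac{\phi(1)}{\phi(i)}T_1^{n\mathbf e_1}$.
   Context: $\ell^1_{\mathbb N}$ is the set of summable sequences of nonnegative integers, and $\mathbf e_i$ are the canonical unit sequences. For $X\ne0$ let $\ell_X=\min\{i:X_i>0\}$. The stochastic min-driven coagulation process $X(t)$ started from $X_0$ is the continuous-time Markov chain whose only transitions from state $X$ are: - to $X-\mathbf e_{\ell_X}-\mathbf e_j+\mathbf e_{\ell_X+j}$ at rate $K(\ell_X,j)X_j$ for $j>\ell_X$; - to $X-2\mathbf e_{\ell_X}+\mathbf e_{2\ell_X}$ at rate $K(\ell_X,\ell_X)(X_{\ell_X}-1)$. $T^{X_0}_i=\inf\{t>0:X_1(t)=\dots=X_i(t)=0\}$ for the process started from $X_0$. Thus $T_i^{n\mathbf e_i}$ is the first time all particles of size $\le i$ have disappeared, for the process started with $n$ particles of size $i$. *)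

theory Defs
  imports "HOL-Probability.Probability"
begin

text \<open>States: sequences of nonnegative integers indexed by sizes 1,2,...;
  the entry at index 0 is unused. \<open>X k\<close> = number of particles of size k.\<close>
type_synonym state = "nat \<Rightarrow> nat"

definition in_l1N :: "state \<Rightarrow> bool" where
  "in_l1N X \<longleftrightarrow> finite {k. 0 < X k} \<and> X 0 = 0"

definition unit_seq :: "nat \<Rightarrow> state" ("\<e>") where
  "\<e> i = (\<lambda>k. if k = i then 1 else 0)"

definition scale_seq :: "nat \<Rightarrow> state \<Rightarrow> state" where
  "scale_seq n X = (\<lambda>k. n * X k)"

text \<open>Smallest occupied size \<open>\<ell>_X\<close> (meaningful for X \<noteq> 0).\<close>
definition ellX :: "state \<Rightarrow> nat" where
  "ellX X = (LEAST i. 0 < X i)"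

definition npart :: "state \<Rightarrow> nat" where
  "npart X = (\<Sum>k\<in>{k. 0 < X k}. X k)"

text \<open>Target of the transition merging a particle of size \<open>\<ell>\<close> with one of size \<open>j\<close>:
  \<open>X - e_\<ell> - e_j + e_(\<ell>+j)\<close> (for \<open>j = \<ell>\<close> this is \<open>X - 2 e_\<ell> + e_(2\<ell>)\<close>).\<close>
definition merge :: "state \<Rightarrow> nat \<Rightarrow> nat \<Rightarrow> state" where
  "merge X l j = (\<lambda>k. X k - (if k = l then 1 else 0) - (if k = j then 1 else 0)
                       + (if k = l + j then 1 else 0))"

text \<open>Transition rate from X to Y of the min-driven coagulation process with kernel K.\<close>
definition rate :: "(nat \<Rightarrow> nat \<Rightarrow> real) \<Rightarrow> state \<Rightarrow> state \<Rightarrow> real" where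
  "rate K X Y =
     (let l = ellX X in
       (\<Sum>j\<in>{j. l < j \<and> 0 < X j \<and> Y = merge X l j}. K l j * real (X j))
       + (if 2 \<le> X l \<and> Y = merge X l l then K l l * (real (X l) - 1) else 0))"

definition total_rate :: "(nat \<Rightarrow> nat \<Rightarrow> real) \<Rightarrow> state \<Rightarrow> real" where
  "total_rate K X =
     (let l = ellX X in
       (\<Sum>j\<in>{j. l < j \<and> 0 < X j}. K l j * real (X j)) + K l l * (real (X l) - 1))"

text \<open>Jump-hold construction of the law of the hitting time of the set A:
  if A holds the hitting time is 0; otherwise wait an Exp(q) holding time,
  jump to Y with probability rate/q, and add the (independent) hitting time from Y.
  If q = 0 and A fails, the state is absorbing and the hitting time is \<open>\<infinity>\<close>,
  which carries no mass on the real line (the law is a sub-probability measure on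
  \<real>, the missing mass being P(T = \<infinity>)).
  The fuel parameter bounds the number of jumps.\<close>
primrec hit_law :: "(nat \<Rightarrow> nat \<Rightarrow> real) \<Rightarrow> (state \<Rightarrow> bool) \<Rightarrow> nat \<Rightarrow> state \<Rightarrow> real measure" where
  "hit_law K A 0 X = (if A X then return borel 0 else null_measure borel)"
| "hit_law K A (Suc f) X =
     (if A X then return borel 0
      else if total_rate K X \<le> 0 then null_measure borel
      else density lborel (exponential_density (total_rate K X)) \<star>
           (density (count_space UNIV) (\<lambda>Y. ennreal (rate K X Y / total_rate K X))
              \<bind> (\<lambda>Y. hit_law K A f Y)))"

text \<open>Law of \<open>T_i^{X}\<close>: every transition lowers the particle number by one,
  so from X at most \<open>npart X\<close> jumps can occur and the fuel \<open>npart X\<close> never truncates.\<close>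
definition T_law :: "(nat \<Rightarrow> nat \<Rightarrow> real) \<Rightarrow> nat \<Rightarrow> state \<Rightarrow> real measure" where
  "T_law K i X = hit_law K (\<lambda>Y. \<forall>k\<in>{1..i}. Y k = 0) (npart X) X"

end

theory Submission imports Defs begin
lemma bind_kern_cong:
  fixes g :: "'a \<Rightarrow> ennreal"
  assumes "\<And>Z. g Z \<noteq> 0 \<Longrightarrow> F Z = G Z" "\<And>Z. sets (F Z) = sets N" "\<And>Z. sets (G Z) = sets N"
  shows "density (count_space UNIV) g \<bind> F = density (count_space UNIV) g \<bind> G"
proof -
  let ?M = "density (count_space UNIV) g"
  have e: "(\<lambda>B. emeasure ?M (F -` B \<inter> space ?M)) = (\<lambda>B. emeasure ?M (G -` B \<inter> space ?M))"
  proof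
    fix B
    show "emeasure ?M (F -` B \<inter> space ?M) = emeasure ?M (G -` B \<inter> space ?M)"
      unfolding emeasure_density[OF borel_measurable_count_space sets_UNIV[of _]]
    proof (simp add: emeasure_density, intro nn_integral_cong)
      fix x show "g x * indicator (F -` B) x = g x * indicator (G -` B) x"
        using assms(1)[of x] by (cases "g x = 0") (auto simp: indicator_def)
    qed
  qed
  have s: "subprob_algebra (F x) = subprob_algebra N" "subprob_algebra (G x) = subprob_algebra N" for x
    using assms(2,3) by (auto intro: subprob_algebra_cong)
  have e': "(\<lambda>B. emeasure ?M (F -` B)) = (\<lambda>B. emeasure ?M (G -` B))"
    using e by simp
  show ?thesis
    by (simp add: bind_nonempty s distr_def e')
qed
lemma exp_scale:
  assumes c: "0 < c" and q: "0 < q"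
  shows "distr (density lborel (\<lambda>x. ennreal (exponential_density q x))) borel (\<lambda>t. c * t)
       = density lborel (\<lambda>x. ennreal (exponential_density (q / c) x))"
proof (rule measure_eqI)
  fix A assume "A \<in> sets (distr (density lborel (\<lambda>x. ennreal (exponential_density q x))) borel (\<lambda>t. c * t))"
  then have A[measurable]: "A \<in> sets borel" by simp
  have "emeasure (density lborel (\<lambda>x. ennreal (exponential_density (q / c) x))) A
      = (\<integral>\<^sup>+y. ennreal (exponential_density (q / c) y) * indicator A y \<partial>lborel)"
    by (simp add: emeasure_density)
  also have "\<dots> = \<bar>c\<bar> * (\<integral>\<^sup>+x. ennreal (exponential_density (q / c) (0 + c * x)) * indicator A (0 + c * x) \<partial>lborel)"
    by (rule nn_integral_real_affine) (use c in auto)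
  also have "\<dots> = (\<integral>\<^sup>+x. ennreal c * (ennreal (exponential_density (q / c) (c * x)) * indicator A (c * x)) \<partial>lborel)"
    using c by (subst nn_integral_cmult) auto
  also have "\<dots> = (\<integral>\<^sup>+x. ennreal (exponential_density q x) * indicator ((\<lambda>t. c * t) -` A) x \<partial>lborel)"
  proof (intro nn_integral_cong)
    fix x :: real
    have "c * exponential_density (q / c) (c * x) = exponential_density q x"
      using c by (auto simp: exponential_density_def mult_less_0_iff)
    then show "ennreal c * (ennreal (exponential_density (q / c) (c * x)) * indicator A (c * x))
        = ennreal (exponential_density q x) * indicator ((\<lambda>t. c * t) -` A) x"
      using c q by (auto simp: indicator_def ennreal_mult[symmetric] exponential_density_def mult_less_0_iff)
  qed
  also have "\<dots> = emeasure (distr (density lborel (\<lambda>x. ennreal (exponential_density q x))) borel (\<lambda>t. c * t)) A"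
  proof -
    have m: "(\<lambda>t::real. c*t) \<in> borel_measurable borel" by measurable
    have s: "(\<lambda>t. c*t) -` A \<inter> space borel \<in> sets borel" using measurable_sets[OF m A] .
    have m': "(\<lambda>t::real. c*t) \<in> measurable (density lborel (\<lambda>x. ennreal (exponential_density q x))) borel"
      by measurable
    show ?thesis
      apply (subst emeasure_distr[OF m' A])
      apply (subst emeasure_density)
      using s by auto
  qed
  finally show "emeasure (distr (density lborel (\<lambda>x. ennreal (exponential_density q x))) borel (\<lambda>t. c * t)) A
      = emeasure (density lborel (\<lambda>x. ennreal (exponential_density (q / c) x))) A" by simp
qed simp

lemma conv_scale:
  fixes E B :: "real measure"
  assumes fE: "finite_measure E" and fB: "finite_measure B"
    and [measurable_cong]: "sets E = sets borel" "sets B = sets borel"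
  shows "distr (E \<star> B) borel (\<lambda>t. c * t) = (distr E borel (\<lambda>t. c * t) \<star> distr B borel (\<lambda>t. c * t))"
proof -
  have sf: "sigma_finite_measure (distr B borel (\<lambda>t. c * t))"
    using finite_measure.finite_measure_distr[OF fB, of "\<lambda>t. c * t" borel]
    by (auto intro: finite_measure.sigma_finite_measure)
  have pm: "distr E borel (\<lambda>t. c * t) \<Otimes>\<^sub>M distr B borel (\<lambda>t. c * t)
      = distr (E \<Otimes>\<^sub>M B) (borel \<Otimes>\<^sub>M borel) (\<lambda>(x, y). (c * x, c * y))"
    by (rule pair_measure_distr) (auto intro: sf)
  have "(distr E borel (\<lambda>t. c * t) \<star> distr B borel (\<lambda>t. c * t))
      = distr (distr (E \<Otimes>\<^sub>M B) (borel \<Otimes>\<^sub>M borel) (\<lambda>(x, y). (c * x, c * y))) borel (\<lambda>(x, y). x + y)"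
    unfolding convolution_def pm ..
  also have "\<dots> = distr (E \<Otimes>\<^sub>M B) borel ((\<lambda>(x, y). x + y) \<circ> (\<lambda>(x, y). (c * x, c * y)))"
    by (rule distr_distr) auto
  also have "\<dots> = distr (E \<Otimes>\<^sub>M B) borel ((\<lambda>t. c * t) \<circ> (\<lambda>(x, y). x + y))"
    by (rule distr_cong) (auto simp: distrib_left)
  also have "\<dots> = distr (E \<star> B) borel (\<lambda>t. c * t)"
    unfolding convolution_def by (rule distr_distr[symmetric]) auto
  finally show ?thesis by simp
qed

lemma distr_null_scale: "distr (null_measure (borel::real measure)) borel (\<lambda>t. c * t) = null_measure borel"
  by (rule measure_eqI) (auto simp: emeasure_distr)

lemma distr_null_gen:
  "f \<in> borel_measurable (borel::real measure) \<Longrightarrow> distr (null_measure (borel::real measure)) (borel::real measure) f = null_measure borel"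
  by (rule measure_eqI) (auto simp: emeasure_distr)

lemma distr_return_scale: "distr (return (borel::real measure) 0) borel (\<lambda>t. c * t) = return borel 0"
  by (subst distr_return) auto


lemma conv_subprob:
  fixes E B :: "real measure"
  assumes E: "prob_space E" and B: "subprob_space B"
    and sE: "sets E = sets borel" and sB: "sets B = sets borel"
  shows "subprob_space (E \<star> B)"
proof -
  interpret B: subprob_space B by fact
  interpret E: prob_space E by fact
  have spE: "space E = UNIV" using sets_eq_imp_space_eq[OF sE] by simp
  have spB: "space B = UNIV" using sets_eq_imp_space_eq[OF sB] by simp
  have "subprob_space (E \<Otimes>\<^sub>M B)"
  proof (rule subprob_spaceI)
    have "emeasure (E \<Otimes>\<^sub>M B) (space (E \<Otimes>\<^sub>M B)) = emeasure E (space E) * emeasure B (space B)"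
      by (simp add: space_pair_measure B.emeasure_pair_measure_Times)
    also have "\<dots> \<le> 1" using B.emeasure_space_le_1 by (simp add: E.emeasure_space_1)
    finally show "emeasure (E \<Otimes>\<^sub>M B) (space (E \<Otimes>\<^sub>M B)) \<le> 1" .
    show "space (E \<Otimes>\<^sub>M B) \<noteq> {}" by (simp add: space_pair_measure spE spB)
  qed
  then show ?thesis
    unfolding convolution_def
  proof (rule subprob_space.subprob_space_distr)
    note [measurable_cong] = sE sB
    show "(\<lambda>(x, y). x + y) \<in> measurable (E \<Otimes>\<^sub>M B) (borel :: real measure)" by measurable
  qed simp
qed

lemma hit_sets[simp]: "sets (hit_law K A f X) = sets borel"
proof (induction f arbitrary: X)
  case 0 show ?case by simp
next
  case (Suc f)
  have "sets (density (count_space UNIV) (\<lambda>Y. ennreal (rate K X Y / total_rate K X)) \<bind> hit_law K A f) = sets borel"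
    by (rule sets_bind) (auto simp: Suc.IH)
  then show ?case by simp
qed

lemma ellX_props:
  assumes "in_l1N X" "X \<noteq> (\<lambda>_. 0)"
  shows "0 < X (ellX X)" "1 \<le> ellX X" "\<And>k. 0 < X k \<Longrightarrow> ellX X \<le> k"
proof -
  obtain k where k: "0 < X k" using assms(2) by auto
  show *: "0 < X (ellX X)" unfolding ellX_def by (rule LeastI[of _ k]) (rule k)
  have "ellX X \<noteq> 0"
  proof
    assume "ellX X = 0"
    with * have "0 < X 0" by simp
    with assms(1) show False by (simp add: in_l1N_def)
  qed
  then show "1 \<le> ellX X" by simp
  show "\<And>k. 0 < X k \<Longrightarrow> ellX X \<le> k" unfolding ellX_def by (rule Least_le)
qed

lemma merge_l1N:
  assumes "in_l1N X" "1 \<le> l" "1 \<le> j"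
  shows "in_l1N (merge X l j)"
proof -
  have sub: "{k. 0 < merge X l j k} \<subseteq> insert (l + j) {k. 0 < X k}"
  proof
    fix k assume "k \<in> {k. 0 < merge X l j k}"
    then show "k \<in> insert (l + j) {k. 0 < X k}"
      by (cases "k = l + j") (auto simp: merge_def)
  qed
  have f: "finite {k. 0 < merge X l j k}"
    by (rule finite_subset[OF sub]) (use assms(1) in \<open>simp add: in_l1N_def\<close>)
  have "merge X l j 0 = 0" using assms by (simp add: merge_def in_l1N_def)
  with f show ?thesis by (simp add: in_l1N_def)
qed

lemma rate_nz:
  assumes "rate K X Z \<noteq> 0"
  shows "(\<exists>j. ellX X < j \<and> 0 < X j \<and> Z = merge X (ellX X) j) \<or> (2 \<le> X (ellX X) \<and> Z = merge X (ellX X) (ellX X))"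
proof (rule ccontr)
  assume neg: "\<not> ?thesis"
  then have e: "{j. ellX X < j \<and> 0 < X j \<and> Z = merge X (ellX X) j} = {}" by blast
  have nc: "\<not> (2 \<le> X (ellX X) \<and> Z = merge X (ellX X) (ellX X))" using neg by blast
  have "rate K X Z = 0" unfolding rate_def Let_def e if_not_P[OF nc] by simp
  with assms show False by simp
qed

lemma rate_nz_l1N:
  assumes "rate K X Z \<noteq> 0" "in_l1N X" "X \<noteq> (\<lambda>_. 0)"
  shows "in_l1N Z"
proof -
  have l: "1 \<le> ellX X" using ellX_props[OF assms(2,3)] by simp
  from rate_nz[OF assms(1)] show ?thesis
  proof
    assume "\<exists>j. ellX X < j \<and> 0 < X j \<and> Z = merge X (ellX X) j"
    then obtain j where "ellX X < j" "Z = merge X (ellX X) j" by blast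
    then show ?thesis using merge_l1N[OF assms(2) l, of j] l by simp
  next
    assume "2 \<le> X (ellX X) \<and> Z = merge X (ellX X) (ellX X)"
    then show ?thesis using merge_l1N[OF assms(2) l l] by simp
  qed
qed

lemma kern_mass:
  assumes Kpos: "\<And>a b. 1 \<le> a \<Longrightarrow> 1 \<le> b \<Longrightarrow> 0 \<le> K a b"
    and X: "in_l1N X" "X \<noteq> (\<lambda>_. 0)" and q: "0 < total_rate K X"
  shows "emeasure (density (count_space UNIV) (\<lambda>Y. ennreal (rate K X Y / total_rate K X))) UNIV = 1"
proof -
  define l where "l = ellX X"
  define J where "J = {j. l < j \<and> 0 < X j}"
  define m where "m = merge X l"
  define S where "S = m ` J \<union> {m l}"
  have l1: "1 \<le> l" "0 < X l" using ellX_props[OF X] by (auto simp: l_def)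
  have fJ: "finite J" using X(1) unfolding J_def in_l1N_def by (auto intro: finite_subset)
  have fS: "finite S" using fJ by (simp add: S_def)
  have rate_eq: "rate K X Z = (\<Sum>j\<in>{j\<in>J. m j = Z}. K l j * real (X j))
      + (if 2 \<le> X l \<and> Z = m l then K l l * (real (X l) - 1) else 0)" for Z
  proof -
    have "{j. l < j \<and> 0 < X j \<and> Z = merge X l j} = {j\<in>J. m j = Z}"
      by (auto simp: J_def m_def)
    then show ?thesis unfolding rate_def Let_def l_def[symmetric] m_def by simp
  qed
  have tot_eq: "total_rate K X = (\<Sum>j\<in>J. K l j * real (X j)) + K l l * (real (X l) - 1)"
    unfolding total_rate_def Let_def l_def[symmetric] J_def ..
  have nn: "0 \<le> rate K X Z" for Z
    unfolding rate_eq using l1 Kpos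
    by (intro add_nonneg_nonneg sum_nonneg) (auto simp: J_def)
  have out: "rate K X Z = 0" if "Z \<notin> S" for Z
  proof -
    have e: "{j\<in>J. m j = Z} = {}" using that by (auto simp: S_def)
    have nc: "\<not> (2 \<le> X l \<and> Z = m l)" using that by (auto simp: S_def)
    show ?thesis unfolding rate_eq e if_not_P[OF nc] by simp
  qed
  have sumS: "(\<Sum>Z\<in>S. rate K X Z) = total_rate K X"
  proof -
    have g: "(\<Sum>Z\<in>S. \<Sum>j\<in>{j\<in>J. m j = Z}. K l j * real (X j)) = (\<Sum>j\<in>J. K l j * real (X j))"
      by (rule sum.group[OF fJ fS]) (auto simp: S_def)
    have d: "(\<Sum>Z\<in>S. (if 2 \<le> X l \<and> Z = m l then K l l * (real (X l) - 1) else 0))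
        = (if 2 \<le> X l then K l l * (real (X l) - 1) else 0)"
    proof -
      have "(\<Sum>Z\<in>S. (if 2 \<le> X l \<and> Z = m l then K l l * (real (X l) - 1) else 0))
          = (\<Sum>Z\<in>S. (if Z = m l then (if 2 \<le> X l then K l l * (real (X l) - 1) else 0) else 0))"
        by (rule sum.cong) auto
      also have "\<dots> = (if 2 \<le> X l then K l l * (real (X l) - 1) else 0)"
        using fS by (simp add: sum.delta S_def)
      finally show ?thesis .
    qed
    have e: "(if 2 \<le> X l then K l l * (real (X l) - 1) else 0) = K l l * (real (X l) - 1)"
    proof (cases "2 \<le> X l")
      case False then have "X l = 1" using l1 by auto
      then show ?thesis by simp
    qed simp
    show ?thesis unfolding rate_eq sum.distrib g d e tot_eq ..
  qed
  have "emeasure (density (count_space UNIV) (\<lambda>Y. ennreal (rate K X Y / total_rate K X))) UNIV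
      = (\<integral>\<^sup>+Y. ennreal (rate K X Y / total_rate K X) \<partial>count_space UNIV)"
    by (simp add: emeasure_density)
  also have "\<dots> = (\<Sum>Y\<in>S. ennreal (rate K X Y / total_rate K X))"
    by (rule nn_integral_count_space'[OF fS]) (auto simp: out)
  also have "\<dots> = ennreal (\<Sum>Y\<in>S. rate K X Y / total_rate K X)"
    using nn q by (intro sum_ennreal) auto
  also have "\<dots> = 1"
    using q by (simp add: sum_divide_distrib[symmetric] sumS)
  finally show ?thesis .
qed

lemma kern_bind_subprob:
  assumes Kpos: "\<And>a b. 1 \<le> a \<Longrightarrow> 1 \<le> b \<Longrightarrow> 0 \<le> K a b"
    and X: "in_l1N X" "X \<noteq> (\<lambda>_. 0)" and q: "0 < total_rate K X"
    and H: "\<And>Z. in_l1N Z \<Longrightarrow> subprob_space (H Z)" "\<And>Z. sets (H Z) = sets borel"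
  shows "subprob_space (density (count_space UNIV) (\<lambda>Y. ennreal (rate K X Y / total_rate K X)) \<bind> H)"
proof -
  let ?M = "density (count_space UNIV) (\<lambda>Y. ennreal (rate K X Y / total_rate K X))"
  define F where "F Z = (if in_l1N Z then H Z else null_measure borel)" for Z
  have eq: "?M \<bind> H = ?M \<bind> F"
  proof (rule bind_kern_cong[where N=borel])
    fix Z assume "ennreal (rate K X Z / total_rate K X) \<noteq> 0"
    then have "rate K X Z \<noteq> 0" by auto
    then have "in_l1N Z" using rate_nz_l1N X by blast
    then show "H Z = F Z" by (simp add: F_def)
  qed (auto simp: F_def H)
  have Fm: "F \<in> measurable (count_space UNIV) (subprob_algebra borel)"
    by (auto simp: F_def space_subprob_algebra subprob_space_null_measure H)
  have "subprob_space ?M"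
    by (rule subprob_spaceI) (use kern_mass[OF Kpos X q] in auto)
  then show ?thesis unfolding eq by (rule subprob_space_bind[where N=borel]) (use Fm in simp)
qed

lemma hit_subprob:
  assumes Kpos: "\<And>a b. 1 \<le> a \<Longrightarrow> 1 \<le> b \<Longrightarrow> 0 \<le> K a b" and A0: "A (\<lambda>_. 0)"
  shows "in_l1N X \<Longrightarrow> subprob_space (hit_law K A f X)"
proof (induction f arbitrary: X)
  case 0
  then show ?case by (auto simp: subprob_space_return subprob_space_null_measure)
next
  case (Suc f)
  show ?case
  proof (cases "A X \<or> total_rate K X \<le> 0")
    case True
    then show ?thesis by (auto simp: subprob_space_return subprob_space_null_measure)
  next
    case False
    then have X0: "X \<noteq> (\<lambda>_. 0)" using A0 by auto
    have q: "0 < total_rate K X" using False by auto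
    show ?thesis using False
      by (auto intro!: conv_subprob prob_space_exponential_density kern_bind_subprob[OF Kpos Suc.prems X0 q]
           Suc.IH)
  qed
qed


definition emb :: "nat \<Rightarrow> state \<Rightarrow> state" where
  "emb i Y = (\<lambda>k. if k mod i = 0 then Y (k div i) else 0)"

lemma emb_mult[simp]: "0 < i \<Longrightarrow> emb i Y (i * m) = Y m"
  by (simp add: emb_def)

lemma emb_1[simp]: "emb 1 Y = Y"
  by (simp add: emb_def)

lemma emb_pos: "0 < emb i Y k \<Longrightarrow> k = i * (k div i) \<and> 0 < Y (k div i)"
  by (auto simp: emb_def split: if_splits)

lemma inj_emb: assumes "0 < i" shows "inj (emb i)"
proof
  fix Y Z assume "emb i Y = emb i Z"
  then have "emb i Y (i * m) = emb i Z (i * m)" for m by simp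
  then show "Y = Z" using assms by (auto intro!: ext)
qed

lemma emb_eq_iff[simp]: "0 < i \<Longrightarrow> emb i Y = emb i Z \<longleftrightarrow> Y = Z"
  using inj_emb by (auto dest: injD)

lemma emb_support: assumes "0 < i" shows "{k. 0 < emb i Y k} = (*) i ` {m. 0 < Y m}"
proof
  show "{k. 0 < emb i Y k} \<subseteq> (*) i ` {m. 0 < Y m}"
    using emb_pos by (auto simp: image_iff)
  show "(*) i ` {m. 0 < Y m} \<subseteq> {k. 0 < emb i Y k}" using assms by auto
qed

lemma l1N_emb: assumes "0 < i" shows "in_l1N (emb i Y) \<longleftrightarrow> in_l1N Y"
proof -
  have "inj_on ((*) i) {m. 0 < Y m}" using assms by (auto simp: inj_on_def)
  then have "finite {k. 0 < emb i Y k} \<longleftrightarrow> finite {m. 0 < Y m}"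
    unfolding emb_support[OF assms] by (rule finite_image_iff)
  moreover have "emb i Y 0 = Y 0" using emb_mult[OF assms, of Y 0] by simp
  ultimately show ?thesis by (simp add: in_l1N_def)
qed

lemma merge_emb:
  assumes i: "0 < i"
  shows "merge (emb i Y) i (i * m) = emb i (merge Y 1 m)"
proof
  fix k
  show "merge (emb i Y) i (i * m) k = emb i (merge Y 1 m) k"
  proof (cases "k mod i = 0")
    case True
    then obtain t where t: "k = i * t" by auto
    have a3': "i + i * m = i * Suc m" by simp
    have a1: "i * t = i \<longleftrightarrow> t = 1"
      using nat_mult_eq_cancel1[OF i, of t 1] by simp
    have a2: "i * t = i * m \<longleftrightarrow> t = m"
      using nat_mult_eq_cancel1[OF i, of t m] by simp
    have a3: "i * t = i + i * m \<longleftrightarrow> t = Suc m"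
      unfolding a3' by (rule nat_mult_eq_cancel1[OF i])
    note a = a1 a2 a3
    show ?thesis unfolding t merge_def using i a by (simp add: emb_def)
  next
    case False
    have "k \<noteq> i" "k \<noteq> i * m" "k \<noteq> i + i * m" using False by auto
    then show ?thesis using False by (simp add: merge_def emb_def)
  qed
qed

lemma ellX_emb:
  assumes i: "0 < i" and Y: "in_l1N Y" "0 < Y 1"
  shows "ellX (emb i Y) = i"
  unfolding ellX_def
proof (rule Least_equality)
  show "0 < emb i Y i" using emb_mult[OF i, of Y 1] Y by simp
  fix y assume "0 < emb i Y y"
  then have "y = i * (y div i)" "0 < Y (y div i)" using emb_pos by blast+
  moreover have "y div i \<noteq> 0"
  proof
    assume "y div i = 0"
    with calculation(2) have "0 < Y 0" by simp
    with Y(1) show False by (simp add: in_l1N_def)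
  qed
  ultimately have y: "y = i * (y div i)" "1 \<le> y div i" by auto
  have "i * 1 \<le> i * (y div i)" by (rule mult_le_mono2[OF y(2)])
  then show "i \<le> y" using y(1) by simp
qed

lemma A_emb:
  assumes i: "0 < i"
  shows "(\<forall>k\<in>{1..i}. emb i Y k = 0) \<longleftrightarrow> Y 1 = 0"
proof
  assume "\<forall>k\<in>{1..i}. emb i Y k = 0"
  then have "emb i Y i = 0" using i by auto
  then show "Y 1 = 0" using emb_mult[OF i, of Y 1] by simp
next
  assume Y: "Y 1 = 0"
  show "\<forall>k\<in>{1..i}. emb i Y k = 0"
  proof
    fix k assume k: "k \<in> {1..i}"
    show "emb i Y k = 0"
    proof (cases "k = i")
      case True then show ?thesis using emb_mult[OF i, of Y 1] Y by simp
    next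
      case False
      then have "k mod i \<noteq> 0" using k by auto
      then show ?thesis by (simp add: emb_def)
    qed
  qed
qed

lemma emb_set:
  assumes i: "0 < i"
  shows "{j. i < j \<and> 0 < emb i Y j \<and> P j} = (*) i ` {m. 1 < m \<and> 0 < Y m \<and> P (i * m)}"
proof
  show "{j. i < j \<and> 0 < emb i Y j \<and> P j} \<subseteq> (*) i ` {m. 1 < m \<and> 0 < Y m \<and> P (i * m)}"
  proof
    fix j assume j: "j \<in> {j. i < j \<and> 0 < emb i Y j \<and> P j}"
    then have e: "j = i * (j div i)" "0 < Y (j div i)" using emb_pos by blast+
    have "1 < j div i" using j e(1) i by (metis mem_Collect_eq nat_mult_less_cancel_disj nat_mult_1_right not_less_eq)
    then show "j \<in> (*) i ` {m. 1 < m \<and> 0 < Y m \<and> P (i * m)}"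
      using e j by (auto simp: image_iff intro!: exI[of _ "j div i"])
  qed
  show "(*) i ` {m. 1 < m \<and> 0 < Y m \<and> P (i * m)} \<subseteq> {j. i < j \<and> 0 < emb i Y j \<and> P j}"
    using i by auto
qed

lemma min_phi:
  fixes \<phi> :: "nat \<Rightarrow> real" and i m :: nat
  assumes incr: "mono_on {1..} \<phi>" and i: "0 < i" and m: "1 \<le> m"
  shows "min (\<phi> i) (\<phi> (i * m)) = (\<phi> i :: real)"
proof -
  have "i \<le> i * m" using m by (cases m) auto
  then have "\<phi> i \<le> \<phi> (i * m)" using i m by (intro mono_onD[OF incr]) auto
  then show ?thesis by simp
qed

lemma rate_emb:
  assumes incr: "mono_on {1..} \<phi>" and i: "0 < i" and Y: "in_l1N Y" "0 < Y 1"
  shows "rate (\<lambda>a b. min (\<phi> a) (\<phi> b)) (emb i Y) Z = \<phi> i *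
     ((\<Sum>m\<in>{m. 1 < m \<and> 0 < Y m \<and> Z = emb i (merge Y 1 m)}. real (Y m))
      + (if 2 \<le> Y 1 \<and> Z = emb i (merge Y 1 1) then real (Y 1) - 1 else 0))"
proof -
  let ?S = "{m. 1 < m \<and> 0 < Y m \<and> Z = emb i (merge Y 1 m)}"
  have l: "ellX (emb i Y) = i" by (rule ellX_emb[OF i Y])
  have set: "{j. i < j \<and> 0 < emb i Y j \<and> Z = merge (emb i Y) i j} = (*) i ` ?S"
    using emb_set[OF i, of Y "\<lambda>j. Z = merge (emb i Y) i j"] merge_emb[OF i] by simp
  have inj: "inj_on ((*) i) ?S" using i by (auto simp: inj_on_def)
  have s: "(\<Sum>j\<in>(*) i ` ?S. min (\<phi> i) (\<phi> j) * real (emb i Y j)) = (\<Sum>m\<in>?S. \<phi> i * real (Y m))"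
    by (subst sum.reindex[OF inj]) (auto intro!: sum.cong simp: min_phi[OF incr i] i)
  have e1: "emb i Y i = Y 1" using emb_mult[OF i, of Y 1] by simp
  have e2: "merge (emb i Y) i i = emb i (merge Y 1 1)" using merge_emb[OF i, of Y 1] by simp
  show ?thesis
    unfolding rate_def Let_def l set s e1 e2 by (simp add: sum_distrib_left distrib_left)
qed

lemma total_emb:
  assumes incr: "mono_on {1..} \<phi>" and i: "0 < i" and Y: "in_l1N Y" "0 < Y 1"
  shows "total_rate (\<lambda>a b. min (\<phi> a) (\<phi> b)) (emb i Y) = \<phi> i *
     ((\<Sum>m\<in>{m. 1 < m \<and> 0 < Y m}. real (Y m)) + (real (Y 1) - 1))"
proof -
  let ?S = "{m. 1 < m \<and> 0 < Y m}"
  have l: "ellX (emb i Y) = i" by (rule ellX_emb[OF i Y])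
  have set: "{j. i < j \<and> 0 < emb i Y j} = (*) i ` ?S"
    using emb_set[OF i, of Y "\<lambda>j. True"] by simp
  have inj: "inj_on ((*) i) ?S" using i by (auto simp: inj_on_def)
  have s: "(\<Sum>j\<in>(*) i ` ?S. min (\<phi> i) (\<phi> j) * real (emb i Y j)) = (\<Sum>m\<in>?S. \<phi> i * real (Y m))"
    by (subst sum.reindex[OF inj]) (auto intro!: sum.cong simp: min_phi[OF incr i] i)
  have e1: "emb i Y i = Y 1" using emb_mult[OF i, of Y 1] by simp
  show ?thesis
    unfolding total_rate_def Let_def l set s e1 by (simp add: sum_distrib_left distrib_left)
qed

lemma density_emb_gen:
  fixes g :: "'b \<Rightarrow> ennreal" and e :: "'a \<Rightarrow> 'b"
  assumes inj: "inj e" and out: "\<And>Z. Z \<notin> range e \<Longrightarrow> g Z = 0" and eq: "\<And>Z0. g (e Z0) = h Z0"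
  shows "density (count_space UNIV) g = distr (density (count_space UNIV) h) (count_space UNIV) e"
proof (rule measure_eqI)
  fix A assume "A \<in> sets (density (count_space UNIV) g)"
  have "emeasure (distr (density (count_space UNIV) h) (count_space UNIV) e) A
      = (\<integral>\<^sup>+Z0. h Z0 * indicator (e -` A) Z0 \<partial>count_space UNIV)"
    by (simp add: emeasure_distr emeasure_density)
  also have "\<dots> = (\<integral>\<^sup>+Z0. (\<lambda>Z. g Z * indicator A Z) (e Z0) \<partial>count_space UNIV)"
    by (simp add: eq indicator_def)
  also have "\<dots> = (\<integral>\<^sup>+Z. g Z * indicator A Z \<partial>count_space (range e))"
    by (rule nn_integral_bij_count_space) (use inj in \<open>simp add: bij_betw_def\<close>)
  also have "\<dots> = (\<integral>\<^sup>+Z. g Z * indicator A Z * indicator (range e) Z \<partial>count_space UNIV)"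
    by (rule nn_integral_count_space_indicator) simp
  also have "\<dots> = (\<integral>\<^sup>+Z. g Z * indicator A Z \<partial>count_space UNIV)"
    by (intro nn_integral_cong) (auto simp: indicator_def out)
  also have "\<dots> = emeasure (density (count_space UNIV) g) A"
    by (simp add: emeasure_density)
  finally show "emeasure (density (count_space UNIV) g) A =
      emeasure (distr (density (count_space UNIV) h) (count_space UNIV) e) A" ..
qed simp

lemma kern_emb:
  assumes pos: "\<And>k. 1 \<le> k \<Longrightarrow> 0 < \<phi> k" and incr: "mono_on {1..} \<phi>"
    and i: "0 < i" and Y: "in_l1N Y" "0 < Y 1"
  defines "K \<equiv> (\<lambda>a b. min (\<phi> a) (\<phi> b))"
  shows "density (count_space UNIV) (\<lambda>Z. ennreal (rate K (emb i Y) Z / total_rate K (emb i Y)))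
       = distr (density (count_space UNIV) (\<lambda>Z. ennreal (rate K Y Z / total_rate K Y))) (count_space UNIV) (emb i)"
proof (rule density_emb_gen[OF inj_emb[OF i]])
  have pi: "\<phi> i \<noteq> 0" "\<phi> 1 \<noteq> 0" using pos[of i] pos[of 1] i by auto
  let ?T = "(\<Sum>m\<in>{m. 1 < m \<and> 0 < Y m}. real (Y m)) + (real (Y 1) - 1)"
  have ti: "total_rate K (emb i Y) = \<phi> i * ?T" unfolding K_def by (rule total_emb[OF incr i Y])
  have t1: "total_rate K Y = \<phi> 1 * ?T" using total_emb[OF incr zero_less_one Y] unfolding emb_1 K_def by simp
  fix Z0
  let ?R = "(\<Sum>m\<in>{m. 1 < m \<and> 0 < Y m \<and> Z0 = merge Y 1 m}. real (Y m))
      + (if 2 \<le> Y 1 \<and> Z0 = merge Y 1 1 then real (Y 1) - 1 else 0)"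
  have ri: "rate K (emb i Y) (emb i Z0) = \<phi> i * ?R"
    unfolding K_def rate_emb[OF incr i Y] using i by simp
  have r1: "rate K Y Z0 = \<phi> 1 * ?R"
    using rate_emb[OF incr zero_less_one Y, of Z0] unfolding emb_1 K_def by simp
  show "ennreal (rate K (emb i Y) (emb i Z0) / total_rate K (emb i Y)) = ennreal (rate K Y Z0 / total_rate K Y)"
    unfolding ri r1 ti t1 using pi by simp
next
  fix Z assume Z: "Z \<notin> range (emb i)"
  have e: "{m. 1 < m \<and> 0 < Y m \<and> Z = emb i (merge Y 1 m)} = {}" using Z by auto
  have nc: "\<not> (2 \<le> Y 1 \<and> Z = emb i (merge Y 1 1))" using Z by auto
  have "rate K (emb i Y) Z = 0"
    unfolding K_def rate_emb[OF incr i Y] e if_not_P[OF nc] by simp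
  then show "ennreal (rate K (emb i Y) Z / total_rate K (emb i Y)) = 0" by simp
qed


lemma subprob_finite: "subprob_space M \<Longrightarrow> finite_measure M"
  by (simp add: subprob_space_def)

lemma main_scaling:
  assumes pos: "\<And>k. 1 \<le> k \<Longrightarrow> 0 < \<phi> k" and incr: "mono_on {1..} \<phi>" and i: "0 < i"
  defines "K \<equiv> (\<lambda>a b. min (\<phi> a) (\<phi> b))"
  shows "in_l1N Y \<Longrightarrow> hit_law K (\<lambda>Y. \<forall>k\<in>{1..i}. Y k = 0) f (emb i Y)
           = distr (hit_law K (\<lambda>Y. \<forall>k\<in>{1..1}. Y k = 0) f Y) borel (\<lambda>t. \<phi> 1 / \<phi> i * t)"
proof (induction f arbitrary: Y)
  case 0
  show ?case
  proof (cases "Y 1 = 0")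
    case True
    have a: "\<forall>k\<in>{1..i}. emb i Y k = 0" using A_emb[OF i, of Y] True by blast
    have h1: "hit_law K (\<lambda>Y. \<forall>k\<in>{1..i}. Y k = 0) 0 (emb i Y) = return borel 0"
      unfolding hit_law.simps by (rule if_P[OF a])
    have h2: "hit_law K (\<lambda>Y. \<forall>k\<in>{1..1}. Y k = 0) 0 Y = return borel 0"
      using True by simp
    show ?thesis unfolding h1 h2 by (rule distr_return_scale[symmetric])
  next
    case False
    have a: "\<not> (\<forall>k\<in>{1..i}. emb i Y k = 0)" using A_emb[OF i, of Y] False by blast
    have h1: "hit_law K (\<lambda>Y. \<forall>k\<in>{1..i}. Y k = 0) 0 (emb i Y) = null_measure borel"
      unfolding hit_law.simps by (rule if_not_P[OF a])
    have h2: "hit_law K (\<lambda>Y. \<forall>k\<in>{1..1}. Y k = 0) 0 Y = null_measure borel"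
      using False by simp
    show ?thesis unfolding h1 h2 by (rule distr_null_scale[symmetric])
  qed
next
  case (Suc f Y)
  let ?Ai = "\<lambda>Y. \<forall>k\<in>{1..i}. Y k = 0"
  let ?A1 = "\<lambda>Y. \<forall>k\<in>{1..1}. (Y::state) k = 0"
  let ?sc = "\<lambda>t. \<phi> 1 / \<phi> i * t"
  define c where "c = \<phi> 1 / \<phi> i"
  have c: "0 < c" using pos[of 1] pos[of i] i by (simp add: c_def)
  have Kpos: "\<And>a b. 1 \<le> a \<Longrightarrow> 1 \<le> b \<Longrightarrow> 0 \<le> K a b"
    using pos by (auto simp: K_def intro: less_imp_le)
  have Y: "in_l1N Y" by fact
  have eY: "in_l1N (emb i Y)" using l1N_emb[OF i] Y by simp
  have Ai: "?Ai (emb i Y) \<longleftrightarrow> Y 1 = 0" by (rule A_emb[OF i])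
  show ?case
  proof (cases "Y 1 = 0")
    case True
    have a: "?Ai (emb i Y)" using Ai True by blast
    have h1: "hit_law K ?Ai (Suc f) (emb i Y) = return borel 0"
      unfolding hit_law.simps by (rule if_P[OF a])
    have h2: "hit_law K ?A1 (Suc f) Y = return borel 0"
      using True by simp
    show ?thesis unfolding h1 h2 by (rule distr_return_scale[symmetric])
  next
    case False
    then have Y1: "0 < Y 1" by simp
    have nA: "\<not> ?Ai (emb i Y)" using Ai False by blast
    have nA1: "\<not> ?A1 Y" using Y1 by simp
    let ?T = "(\<Sum>m\<in>{m. 1 < m \<and> 0 < Y m}. real (Y m)) + (real (Y 1) - 1)"
    have ti: "total_rate K (emb i Y) = \<phi> i * ?T" unfolding K_def by (rule total_emb[OF incr i Y Y1])
    have t1: "total_rate K Y = \<phi> 1 * ?T" using total_emb[OF incr zero_less_one Y Y1] unfolding emb_1 K_def by simp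
    have pi: "0 < \<phi> i" "0 < \<phi> 1" using pos[of i] pos[of 1] i by auto
    show ?thesis
    proof (cases "?T \<le> 0")
      case True
      then have "total_rate K (emb i Y) \<le> 0" "total_rate K Y \<le> 0"
        unfolding ti t1 using pi by (auto simp: mult_le_0_iff)
      then have le: "total_rate K (emb i Y) \<le> 0" "total_rate K Y \<le> 0" by auto
      have h1: "hit_law K ?Ai (Suc f) (emb i Y) = null_measure borel"
        unfolding hit_law.simps by (rule trans[OF if_not_P[OF nA] if_P[OF le(1)]])
      have h2: "hit_law K ?A1 (Suc f) Y = null_measure borel"
        unfolding hit_law.simps by (rule trans[OF if_not_P[OF nA1] if_P[OF le(2)]])
      show ?thesis unfolding h1 h2 by (rule distr_null_scale[symmetric])
    next
      case False
      then have q1: "0 < total_rate K Y" and qi: "0 < total_rate K (emb i Y)"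
        unfolding ti t1 using pi by auto
      have qiq: "total_rate K (emb i Y) = total_rate K Y / c"
        unfolding ti t1 c_def using pi by (simp add: field_simps)
      have Y0: "Y \<noteq> (\<lambda>_. 0)" using Y1 by auto
      have eY0: "emb i Y \<noteq> (\<lambda>_. 0)" using Y1 emb_mult[OF i, of Y 1] by (metis less_not_refl nat_mult_1_right)
      define Hi where "Hi = hit_law K ?Ai f"
      define H1 where "H1 = hit_law K ?A1 f"
      define Fi where "Fi Z = (if in_l1N Z then Hi Z else null_measure borel)" for Z
      define F1 where "F1 Z = (if in_l1N Z then H1 Z else null_measure borel)" for Z
      define Ki where "Ki = density (count_space UNIV) (\<lambda>Z. ennreal (rate K (emb i Y) Z / total_rate K (emb i Y)))"
      define K1 where "K1 = density (count_space UNIV) (\<lambda>Z. ennreal (rate K Y Z / total_rate K Y))"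
      have Hisub: "\<And>Z. in_l1N Z \<Longrightarrow> subprob_space (Hi Z)"
        unfolding Hi_def by (rule hit_subprob[OF Kpos]) auto
      have H1sub: "\<And>Z. in_l1N Z \<Longrightarrow> subprob_space (H1 Z)"
        unfolding H1_def by (rule hit_subprob[OF Kpos]) auto
      have Fim: "Fi \<in> measurable (count_space UNIV) (subprob_algebra borel)"
        using Hisub by (auto simp: Fi_def space_subprob_algebra subprob_space_null_measure Hi_def)
      have F1m: "F1 \<in> measurable (count_space UNIV) (subprob_algebra borel)"
        using H1sub by (auto simp: F1_def space_subprob_algebra subprob_space_null_measure H1_def)
      have s1: "Ki \<bind> Hi = Ki \<bind> Fi"
        unfolding Ki_def
      proof (rule bind_kern_cong[where N=borel])
        fix Z assume "ennreal (rate K (emb i Y) Z / total_rate K (emb i Y)) \<noteq> 0"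
        then have "rate K (emb i Y) Z \<noteq> 0" by auto
        then have "in_l1N Z" using rate_nz_l1N eY eY0 by blast
        then show "Hi Z = Fi Z" by (simp add: Fi_def)
      qed (auto simp: Fi_def Hi_def)
      have s6: "K1 \<bind> H1 = K1 \<bind> F1"
        unfolding K1_def
      proof (rule bind_kern_cong[where N=borel])
        fix Z assume "ennreal (rate K Y Z / total_rate K Y) \<noteq> 0"
        then have "rate K Y Z \<noteq> 0" by auto
        then have "in_l1N Z" using rate_nz_l1N Y Y0 by blast
        then show "H1 Z = F1 Z" by (simp add: F1_def)
      qed (auto simp: F1_def H1_def)
      have s2: "Ki = distr K1 (count_space UNIV) (emb i)"
        unfolding Ki_def K1_def K_def by (rule kern_emb[OF pos incr i Y Y1])
      have s3: "distr K1 (count_space UNIV) (emb i) \<bind> Fi = K1 \<bind> (\<lambda>Z. Fi (emb i Z))"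
        by (rule bind_distr[OF _ Fim]) (auto simp: K1_def)
      have s4: "K1 \<bind> (\<lambda>Z. Fi (emb i Z)) = K1 \<bind> (\<lambda>Z. distr (F1 Z) borel ?sc)"
      proof (rule bind_cong[OF refl])
        fix Z
        show "Fi (emb i Z) = distr (F1 Z) borel ?sc"
          using Suc.IH[of Z] l1N_emb[OF i, of Z]
          by (auto simp: Fi_def F1_def Hi_def H1_def distr_null_gen)
      qed
      have s5: "K1 \<bind> (\<lambda>Z. distr (F1 Z) borel ?sc) = distr (K1 \<bind> F1) borel ?sc"
      proof -
        have F1m': "F1 \<in> measurable K1 (subprob_algebra borel)" using F1m by (simp add: K1_def)
        show ?thesis by (rule distr_bind[symmetric, OF F1m']) (auto simp: K1_def)
      qed
      have B: "Ki \<bind> Hi = distr (K1 \<bind> H1) borel ?sc"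
        using s1 s2 s3 s4 s5 s6 by simp
      have Bsub: "subprob_space (K1 \<bind> H1)"
      proof -
        have H1sets: "\<And>Z. sets (H1 Z) = sets borel" unfolding H1_def by (rule hit_sets)
        show ?thesis unfolding K1_def by (rule kern_bind_subprob[OF Kpos Y Y0 q1 H1sub H1sets])
      qed
      have Bsets: "sets (K1 \<bind> H1) = sets borel"
        by (rule sets_bind) (auto simp: H1_def K1_def)
      have E: "density lborel (\<lambda>x. ennreal (exponential_density (total_rate K (emb i Y)) x))
          = distr (density lborel (\<lambda>x. ennreal (exponential_density (total_rate K Y) x))) borel ?sc"
        unfolding qiq using exp_scale[OF c q1] by (simp add: c_def)
      have Efin: "finite_measure (density lborel (\<lambda>x. ennreal (exponential_density (total_rate K Y) x)))"
        using prob_space_exponential_density[OF q1] by (simp add: prob_space_def)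
      have "hit_law K ?Ai (Suc f) (emb i Y)
          = (density lborel (\<lambda>x. ennreal (exponential_density (total_rate K (emb i Y)) x)) \<star> (Ki \<bind> Hi))"
        unfolding hit_law.simps Ki_def Hi_def
        by (rule trans[OF if_not_P[OF nA] if_not_P]) (use qi in simp)
      also have "\<dots> = distr (density lborel (\<lambda>x. ennreal (exponential_density (total_rate K Y) x)) \<star> (K1 \<bind> H1)) borel ?sc"
        unfolding E B by (rule conv_scale[symmetric, OF Efin subprob_finite[OF Bsub] _ Bsets]) simp
      also have "\<dots> = distr (hit_law K ?A1 (Suc f) Y) borel ?sc"
      proof -
        have hY: "hit_law K ?A1 (Suc f) Y
          = (density lborel (\<lambda>x. ennreal (exponential_density (total_rate K Y) x)) \<star> (K1 \<bind> H1))"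
          unfolding hit_law.simps K1_def H1_def
          by (rule trans[OF if_not_P[OF nA1] if_not_P]) (use q1 in simp)
        show ?thesis unfolding hY ..
      qed
      finally show ?thesis .
    qed
  qed
qed


theorem lemma5p3:
  fixes \<phi> :: "nat \<Rightarrow> real" and n i :: nat
  assumes pos: "\<And>k. 1 \<le> k \<Longrightarrow> 0 < \<phi> k"
    and incr: "mono_on {1..} \<phi>"
    and n: "2 \<le> n" and i: "1 \<le> i"
  shows "T_law (\<lambda>a b. min (\<phi> a) (\<phi> b)) i (scale_seq n (\<e> i))
       = distr (T_law (\<lambda>a b. min (\<phi> a) (\<phi> b)) 1 (scale_seq n (\<e> 1))) borel
               (\<lambda>t. \<phi> 1 / \<phi> i * t)"
proof -
  have i0: "0 < i" using i by simp
  have e: "scale_seq n (\<e> i) = emb i (scale_seq n (\<e> 1))"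
  proof
    fix k
    show "scale_seq n (\<e> i) k = emb i (scale_seq n (\<e> 1)) k"
    proof (cases "k = i")
      case True
      have "emb i (scale_seq n (\<e> 1)) (i * 1) = scale_seq n (\<e> 1) 1" by (rule emb_mult[OF i0])
      then show ?thesis using True by (simp add: scale_seq_def unit_seq_def)
    next
      case False
      have nd: "k div i \<noteq> 1" if "k mod i = 0"
      proof
        assume "k div i = 1"
        then have "k = i" using div_mult_mod_eq[of k i] that by simp
        with False show False by simp
      qed
      show ?thesis
      proof (cases "k mod i = 0")
        case True
        then show ?thesis using nd[OF True] False by (simp add: scale_seq_def unit_seq_def emb_def)
      next
        case False
        then show ?thesis using \<open>k \<noteq> i\<close> by (simp add: scale_seq_def unit_seq_def emb_def)
      qed
    qed
  qed
  have sup: "{k. 0 < scale_seq n (\<e> j) k} = {j}" for j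
  proof -
    have "0 < scale_seq n (\<e> j) k \<longleftrightarrow> k = j" for k
      using n by (simp add: scale_seq_def unit_seq_def)
    then show ?thesis by blast
  qed
  have np: "npart (scale_seq n (\<e> i)) = npart (scale_seq n (\<e> 1))"
    unfolding npart_def sup by (simp add: scale_seq_def unit_seq_def)
  have l: "in_l1N (scale_seq n (\<e> 1))"
    unfolding in_l1N_def sup by (simp add: scale_seq_def unit_seq_def)
  have "T_law (\<lambda>a b. min (\<phi> a) (\<phi> b)) i (scale_seq n (\<e> i))
      = hit_law (\<lambda>a b. min (\<phi> a) (\<phi> b)) (\<lambda>Y. \<forall>k\<in>{1..i}. Y k = 0)
          (npart (scale_seq n (\<e> 1))) (emb i (scale_seq n (\<e> 1)))"
    unfolding T_law_def np e[symmetric] ..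
  also have "\<dots> = distr (T_law (\<lambda>a b. min (\<phi> a) (\<phi> b)) 1 (scale_seq n (\<e> 1))) borel
               (\<lambda>t. \<phi> 1 / \<phi> i * t)"
    unfolding T_law_def by (rule main_scaling[OF pos incr i0 l])
  finally show ?thesis .
qed

end
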